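(* For every $k\ge2$, the Natarajan dimension of the function class $\mathcal G_k$ (viewed as functions from $\Delta_k$ to the label set $\{e_1,\dots,e_k\}\cong[k]$) equals $k-1$.
   Context: $\Delta_k=\{x\in\mathbb R^k:x\ge0,\sum_ix_i=1\}$, $e_1,\dots,e_k$ the standard basis of $\mathbb R^k$. For $\psi\in\mathbb R^k$, $g_\psi(x):=e_{i^*}$ where $i^*$ is the smallest index minimizing $\|x-e_i\|_1-\psi_i$ over $i\in[k]$; $\mathcal G_k:=\{g_\psi:\psi\in\mathbb R^k\}$. A finite set $C\subseteq\Delta_k$ is N-shattered by a class $\mathcal H$ if there exist $f_0,f_1:C\to\{e_1,\dots,e_k\}$ with $f_0(x)\ne f_1(x)$ for all $x\in C$ such that for every $B\subseteq C$ there is $h\in\mathcal H$ with $h(x)=f_0(x)$ for $x\in B$ and $h(x)=f_1(x)$ for $x\in C\setminus B$. The Natarajan dimension $d_N(\mathcal H)$ is the largest cardinality of an N-shattered set. *)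

theory Defs
  imports "HOL-Analysis.Analysis"
begin

text \<open>Points of R^k are represented as functions nat => real, coordinates indexed
  0..k-1 (0-indexed), and vanishing outside {0..<k}.\<close>

definition prob_simplex :: "nat \<Rightarrow> (nat \<Rightarrow> real) set" where
  "prob_simplex k = {x. (\<forall>i<k. 0 \<le> x i) \<and> (\<forall>i\<ge>k. x i = 0) \<and> (\<Sum>i<k. x i) = 1}"

definition basis_vec :: "nat \<Rightarrow> (nat \<Rightarrow> real)" where
  "basis_vec i = (\<lambda>j. if j = i then 1 else 0)"

definition labels :: "nat \<Rightarrow> (nat \<Rightarrow> real) set" where
  "labels k = basis_vec ` {..<k}"

definition l1_dist :: "nat \<Rightarrow> (nat \<Rightarrow> real) \<Rightarrow> (nat \<Rightarrow> real) \<Rightarrow> real" where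
  "l1_dist k x y = (\<Sum>j<k. \<bar>x j - y j\<bar>)"

definition g_fun :: "nat \<Rightarrow> (nat \<Rightarrow> real) \<Rightarrow> (nat \<Rightarrow> real) \<Rightarrow> (nat \<Rightarrow> real)" where
  "g_fun k psi x = basis_vec (LEAST i. i < k \<and>
      (\<forall>j<k. l1_dist k x (basis_vec i) - psi i \<le> l1_dist k x (basis_vec j) - psi j))"

definition G_class :: "nat \<Rightarrow> ((nat \<Rightarrow> real) \<Rightarrow> (nat \<Rightarrow> real)) set" where
  "G_class k = {g_fun k psi | psi. True}"

definition N_shattered :: "('a \<Rightarrow> 'b) set \<Rightarrow> 'b set \<Rightarrow> 'a set \<Rightarrow> bool" where
  "N_shattered H Y C \<longleftrightarrow> finite C \<and>
     (\<exists>f0 f1. (\<forall>x\<in>C. f0 x \<in> Y \<and> f1 x \<in> Y \<and> f0 x \<noteq> f1 x) \<and>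
        (\<forall>B\<subseteq>C. \<exists>h\<in>H. (\<forall>x\<in>B. h x = f0 x) \<and> (\<forall>x\<in>C - B. h x = f1 x)))"

definition natarajan_dim_eq :: "('a \<Rightarrow> 'b) set \<Rightarrow> 'a set \<Rightarrow> 'b set \<Rightarrow> nat \<Rightarrow> bool" where
  "natarajan_dim_eq H X Y d \<longleftrightarrow>
     (\<exists>C. C \<subseteq> X \<and> N_shattered H Y C \<and> card C = d) \<and>
     (\<forall>C. C \<subseteq> X \<and> N_shattered H Y C \<longrightarrow> card C \<le> d)"

end

theory Submission
  imports Defs
begin

lemma lin_dep_aux:
  fixes v :: "'a \<Rightarrow> nat \<Rightarrow> real"
  shows "finite C \<Longrightarrow> (\<forall>x\<in>C. \<forall>i\<ge>m. v x i = 0) \<Longrightarrow> m < card C \<Longrightarrow>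
    \<exists>c. (\<exists>x\<in>C. c x \<noteq> 0) \<and> (\<forall>i. (\<Sum>x\<in>C. c x * v x i) = 0)"
proof (induction m arbitrary: C v)
  case 0
  then have "C \<noteq> {}" by auto
  then obtain x where "x\<in>C" by auto
  show ?case by (rule exI[of _ "\<lambda>_. 1"]) (use 0 \<open>x\<in>C\<close> in auto)
next
  case (Suc m)
  show ?case
  proof (cases "\<forall>x\<in>C. v x m = 0")
    case True
    have "\<forall>x\<in>C. \<forall>i\<ge>m. v x i = 0" using True Suc.prems(2)
      by (metis Suc_leI le_eq_less_or_eq)
    from Suc.IH[OF Suc.prems(1) this] Suc.prems(3) show ?thesis by simp
  next
    case False
    then obtain y where y: "y\<in>C" "v y m \<noteq> 0" by auto
    define w where "w x i = v x i - (v x m / v y m) * v y i" for x i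
    let ?C = "C - {y}"
    have fin: "finite ?C" using Suc.prems(1) by simp
    have wz: "\<forall>x\<in>?C. \<forall>i\<ge>m. w x i = 0"
    proof (intro ballI allI impI)
      fix x i assume x: "x \<in> ?C" and i: "m \<le> i"
      show "w x i = 0"
      proof (cases "i = m")
        case True then show ?thesis using y(2) by (simp add: w_def)
      next
        case False then have "Suc m \<le> i" using i by simp
        then show ?thesis using Suc.prems(2) x y(1) by (simp add: w_def)
      qed
    qed
    have "m < card ?C" using Suc.prems(1,3) y(1) by simp
    from Suc.IH[OF fin wz this] obtain c' where
      c': "\<exists>x\<in>?C. c' x \<noteq> 0" "\<forall>i. (\<Sum>x\<in>?C. c' x * w x i) = 0" by blast
    define c where "c x = (if x = y then - (\<Sum>z\<in>?C. c' z * v z m) / v y m else c' x)" for x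
    show ?thesis
    proof (intro exI conjI allI)
      show "\<exists>x\<in>C. c x \<noteq> 0" using c'(1) c_def by auto
      fix i
      have "(\<Sum>x\<in>C. c x * v x i) = c y * v y i + (\<Sum>x\<in>?C. c x * v x i)"
        using sum.remove[OF Suc.prems(1) y(1)] by simp
      also have "(\<Sum>x\<in>?C. c x * v x i) = (\<Sum>x\<in>?C. c' x * v x i)"
        by (rule sum.cong) (auto simp: c_def)
      also have "\<dots> = (\<Sum>x\<in>?C. c' x * w x i + (c' x * v x m) / v y m * v y i)"
        by (rule sum.cong) (auto simp: w_def algebra_simps)
      also have "\<dots> = (\<Sum>x\<in>?C. c' x * w x i) + (\<Sum>x\<in>?C. c' x * v x m) / v y m * v y i"
        by (simp add: sum.distrib sum_distrib_right sum_divide_distrib)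
      finally show "(\<Sum>x\<in>C. c x * v x i) = 0" using c'(2) by (simp add: c_def)
    qed
  qed
qed



lemma basis_vec_inj: "basis_vec a = basis_vec b \<Longrightarrow> a = b"
  by (drule fun_cong[of _ _ a]) (simp add: basis_vec_def split: if_splits)

lemma g_fun_least:
  fixes x psi :: "nat \<Rightarrow> real"
  assumes "0 < k"
  defines "P \<equiv> \<lambda>i. i < k \<and> (\<forall>j<k. l1_dist k x (basis_vec i) - psi i \<le> l1_dist k x (basis_vec j) - psi j)"
  shows "P (LEAST i. P i) \<and> (\<forall>i. P i \<longrightarrow> (LEAST i. P i) \<le> i)"
proof -
  let ?f = "\<lambda>i. l1_dist k x (basis_vec i) - psi i"
  have fin: "finite (?f ` {..<k})" and ne: "?f ` {..<k} \<noteq> {}" using assms by auto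
  obtain i where i: "i < k" "?f i = Min (?f ` {..<k})" using Min_in[OF fin ne] by auto
  have "\<forall>j<k. ?f i \<le> ?f j" using i(2) fin by simp
  then have "P i" unfolding P_def using i by blast
  then show ?thesis by (metis LeastI Least_le)
qed

lemma realize:
  assumes "0 < k" "g_fun k psi x = basis_vec a" "b < k"
  shows "a < k \<and> l1_dist k x (basis_vec a) - psi a \<le> l1_dist k x (basis_vec b) - psi b \<and>
    (l1_dist k x (basis_vec b) - psi b \<le> l1_dist k x (basis_vec a) - psi a \<longrightarrow> a \<le> b)"
proof -
  define P where "P \<equiv> \<lambda>i. i < k \<and> (\<forall>j<k. l1_dist k x (basis_vec i) - psi i \<le> l1_dist k x (basis_vec j) - psi j)"
  have L: "P (LEAST i. P i) \<and> (\<forall>i. P i \<longrightarrow> (LEAST i. P i) \<le> i)"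
    using g_fun_least[OF assms(1), of x psi] unfolding P_def by blast
  have "basis_vec (LEAST i. P i) = basis_vec a" using assms(2) unfolding g_fun_def P_def by simp
  then have "(LEAST i. P i) = a" by (rule basis_vec_inj)
  then have Pa: "P a" and le: "\<forall>i. P i \<longrightarrow> a \<le> i" using L by auto
  show ?thesis
  proof (intro conjI impI)
    show "a < k" using Pa P_def by simp
    show "l1_dist k x (basis_vec a) - psi a \<le> l1_dist k x (basis_vec b) - psi b"
      using Pa assms(3) P_def by simp
    assume "l1_dist k x (basis_vec b) - psi b \<le> l1_dist k x (basis_vec a) - psi a"
    then have "P b" using Pa assms(3) unfolding P_def by force
    then show "a \<le> b" using le by blast
  qed
qed

lemma sum_basis: "j < k \<Longrightarrow> (\<Sum>i<k. psi i * basis_vec j i) = (psi j :: real)"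
  by (simp add: basis_vec_def if_distrib[of "\<lambda>t. _ * t"] sum.delta' cong: if_cong)

lemma sum_basis1: "j < k \<Longrightarrow> (\<Sum>i<k. basis_vec j i) = (1::real)"
  using sum_basis[of j k "\<lambda>_. 1"] by simp

lemma l1_simplex:
  assumes "x \<in> prob_simplex k" "j < k"
  shows "l1_dist k x (basis_vec j) = 2 - 2 * x j"
proof -
  have nn: "\<forall>i<k. 0 \<le> x i" and s: "(\<Sum>i<k. x i) = 1" using assms(1) by (auto simp: prob_simplex_def)
  have "x j \<le> 1"
  proof -
    have "x j \<le> (\<Sum>i<k. x i)" using member_le_sum[of j "{..<k}" x] nn assms(2) by auto
    then show ?thesis using s by simp
  qed
  have "l1_dist k x (basis_vec j) = (\<Sum>i<k. x i + (if i = j then 1 - 2 * x i else 0))"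
    unfolding l1_dist_def basis_vec_def
    by (rule sum.cong) (use nn \<open>x j \<le> 1\<close> in auto)
  also have "\<dots> = 1 + (1 - 2 * x j)" using assms(2) s by (simp add: sum.distrib sum.delta')
  finally show ?thesis by simp
qed


lemma g_unique:
  assumes "a < k" "\<forall>j<k. j \<noteq> a \<longrightarrow> l1_dist k x (basis_vec a) - psi a < l1_dist k x (basis_vec j) - psi j"
  shows "g_fun k psi x = basis_vec a"
proof -
  define L where "L = (LEAST i. i < k \<and> (\<forall>j<k. l1_dist k x (basis_vec i) - psi i \<le> l1_dist k x (basis_vec j) - psi j))"
  have "L < k \<and> (\<forall>j<k. l1_dist k x (basis_vec L) - psi L \<le> l1_dist k x (basis_vec j) - psi j)"
    using g_fun_least[of k x psi] assms(1) unfolding L_def by auto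
  then have "L = a" using assms by (meson not_less)
  then show ?thesis unfolding g_fun_def L_def by simp
qed

lemma basis_in_simplex: "j < k \<Longrightarrow> basis_vec j \<in> prob_simplex k"
  using sum_basis1[of j k] by (auto simp: prob_simplex_def basis_vec_def)

lemma l1_basis: "i < k \<Longrightarrow> j < k \<Longrightarrow> l1_dist k (basis_vec i) (basis_vec j) = (if j = i then 0 else 2)"
  using l1_simplex[OF basis_in_simplex, of i k j] by (simp add: basis_vec_def)

lemma lower:
  assumes "k \<ge> 2"
  shows "\<exists>C. C \<subseteq> prob_simplex k \<and> N_shattered (G_class k) (labels k) C \<and> card C = k - 1"
proof (intro exI conjI)
  let ?C = "basis_vec ` {1..<k}"
  show "?C \<subseteq> prob_simplex k" using basis_in_simplex by auto
  have "inj_on basis_vec {1..<k}" by (meson basis_vec_inj inj_onI)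
  then show "card ?C = k - 1" by (simp add: card_image)
  show "N_shattered (G_class k) (labels k) ?C"
  proof -
    have 1: "\<forall>x\<in>?C. x \<in> labels k \<and> basis_vec 0 \<in> labels k \<and> x \<noteq> basis_vec 0"
      using assms by (auto simp: labels_def dest: basis_vec_inj)
    have 2: "\<forall>B\<subseteq>?C. \<exists>h\<in>G_class k. (\<forall>x\<in>B. h x = x) \<and> (\<forall>x\<in>?C - B. h x = basis_vec 0)"
    proof (intro allI impI)
      fix B assume B: "B \<subseteq> ?C"
      define psi :: "nat \<Rightarrow> real" where "psi j = (if j = 0 then 0 else if basis_vec j \<in> B then -1 else -3)" for j
      have key: "g_fun k psi (basis_vec i) = (if basis_vec i \<in> B then basis_vec i else basis_vec 0)"
        if i: "1 \<le> i" "i < k" for i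
      proof (cases "basis_vec i \<in> B")
        case True
        have "g_fun k psi (basis_vec i) = basis_vec i"
          by (rule g_unique) (use i True in \<open>auto simp: l1_basis psi_def\<close>)
        then show ?thesis using True by simp
      next
        case False
        have "g_fun k psi (basis_vec i) = basis_vec 0"
          by (rule g_unique) (use i False in \<open>auto simp: l1_basis psi_def\<close>)
        then show ?thesis using False by simp
      qed
      show "\<exists>h\<in>G_class k. (\<forall>x\<in>B. h x = x) \<and> (\<forall>x\<in>?C - B. h x = basis_vec 0)"
      proof (intro bexI[of _ "g_fun k psi"] conjI ballI)
        show "g_fun k psi \<in> G_class k" by (auto simp: G_class_def)
        fix x assume "x \<in> B"
        then obtain i where "x = basis_vec i" "1 \<le> i" "i < k" using B by auto
        then show "g_fun k psi x = x" using key \<open>x \<in> B\<close> by simp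
      next
        fix x assume x: "x \<in> ?C - B"
        then obtain i where "x = basis_vec i" "1 \<le> i" "i < k" by auto
        then show "g_fun k psi x = basis_vec 0" using key x by simp
      qed
    qed
    show ?thesis unfolding N_shattered_def
      apply (rule conjI, simp)
      apply (rule exI[of _ "\<lambda>x. x"], rule exI[of _ "\<lambda>_. basis_vec 0"])
      by (rule conjI[OF 1 2])
  qed
qed


lemma upper:
  assumes k: "k \<ge> 2" and sh: "N_shattered (G_class k) (labels k) C"
  shows "card C \<le> k - 1"
proof (rule ccontr)
  assume "\<not> ?thesis" then have cardC: "k - 1 < card C" by simp
  from sh obtain f0 f1 where fin: "finite C"
    and f: "\<forall>x\<in>C. f0 x \<in> labels k \<and> f1 x \<in> labels k \<and> f0 x \<noteq> f1 x"
    and sh2: "\<forall>B\<subseteq>C. \<exists>h\<in>G_class k. (\<forall>x\<in>B. h x = f0 x) \<and> (\<forall>x\<in>C-B. h x = f1 x)"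
    unfolding N_shattered_def by blast
  have "\<forall>x\<in>C. \<exists>a. a<k \<and> f0 x = basis_vec a" using f by (auto simp: labels_def)
  then obtain p where p: "\<forall>x\<in>C. p x < k \<and> f0 x = basis_vec (p x)" by metis
  have "\<forall>x\<in>C. \<exists>a. a<k \<and> f1 x = basis_vec a" using f by (auto simp: labels_def)
  then obtain q where q: "\<forall>x\<in>C. q x < k \<and> f1 x = basis_vec (q x)" by metis
  have pq: "\<forall>x\<in>C. p x \<noteq> q x" using f p q by metis
  define v where "v x i = (if i < k - 1 then basis_vec (p x) i - basis_vec (q x) i else (0::real))" for x i
  have supp: "\<forall>x\<in>C. \<forall>i\<ge>k-1. v x i = 0" by (simp add: v_def)
  obtain c0 where c0: "\<exists>x\<in>C. c0 x \<noteq> 0" "\<forall>i. (\<Sum>x\<in>C. c0 x * v x i) = 0"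
    using lin_dep_aux[OF fin supp cardC] by blast
  obtain x0 where x0: "x0 \<in> C" "c0 x0 \<noteq> 0" using c0(1) by blast
  define c where "c x = (if c0 x0 > 0 then c0 x else - c0 x)" for x
  have cx0: "c x0 > 0" using x0(2) by (auto simp: c_def)
  define d where "d i = (\<Sum>x\<in>C. c x * (basis_vec (p x) i - basis_vec (q x) i))" for i
  have d0: "d i = 0" if "i < k - 1" for i
  proof -
    have "(\<Sum>x\<in>C. c0 x * (basis_vec (p x) i - basis_vec (q x) i)) = 0"
      using c0(2)[rule_format, of i] that by (simp add: v_def)
    then show ?thesis by (cases "0 < c0 x0") (simp_all add: d_def c_def sum_negf)
  qed
  have "(\<Sum>i<k. d i) = (\<Sum>x\<in>C. c x * (\<Sum>i<k. basis_vec (p x) i - basis_vec (q x) i))"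
    unfolding d_def by (simp add: sum_distrib_left sum.swap[of _ C])
  also have "\<dots> = 0" using p q by (simp add: sum_subtractf sum_basis1)
  finally have s0: "(\<Sum>i<k. d i) = 0" .
  have "k = Suc (k - 1)" using k by simp
  then have "(\<Sum>i<k. d i) = (\<Sum>i<k-1. d i) + d (k - 1)" by (metis sum.lessThan_Suc)
  then have "d (k - 1) = 0" using s0 d0 by simp
  then have dz: "d i = 0" if "i < k" for i
  proof (cases "i < k - 1")
    case False then have "i = k - 1" using that by linarith
    then show ?thesis using \<open>d (k - 1) = 0\<close> by simp
  qed (rule d0)
  have dep: "(\<Sum>x\<in>C. c x * (psi (p x) - psi (q x))) = 0" for psi :: "nat \<Rightarrow> real"
  proof -
    have "(\<Sum>x\<in>C. c x * (psi (p x) - psi (q x)))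
        = (\<Sum>x\<in>C. c x * (\<Sum>i<k. psi i * (basis_vec (p x) i - basis_vec (q x) i)))"
      by (rule sum.cong) (use p q in \<open>auto simp: right_diff_distrib sum_subtractf sum_basis\<close>)
    also have "\<dots> = (\<Sum>i<k. psi i * d i)"
      unfolding d_def by (simp add: sum_distrib_left sum.swap[of _ C] mult.left_commute)
    also have "\<dots> = 0" using dz by simp
    finally show ?thesis .
  qed
  define T where "T psi x = (l1_dist k x (basis_vec (q x)) - psi (q x)) - (l1_dist k x (basis_vec (p x)) - psi (p x))" for psi :: "nat \<Rightarrow> real" and x
  define A where "A = (\<Sum>x\<in>C. c x * (l1_dist k x (basis_vec (q x)) - l1_dist k x (basis_vec (p x))))"
  have Tsum: "(\<Sum>x\<in>C. c x * T psi x) = A" for psi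
  proof -
    have "(\<Sum>x\<in>C. c x * T psi x) = A + (\<Sum>x\<in>C. c x * (psi (p x) - psi (q x)))"
      unfolding A_def T_def by (simp add: sum.distrib[symmetric] algebra_simps)
    then show ?thesis using dep by simp
  qed
  have k0: "0 < k" using k by simp
  obtain h1 where h1: "h1 \<in> G_class k" "\<forall>x\<in>{x\<in>C. c x > 0}. h1 x = f0 x" "\<forall>x\<in>C - {x\<in>C. c x > 0}. h1 x = f1 x"
    using sh2[rule_format, of "{x\<in>C. c x > 0}"] by blast
  obtain psi1 where psi1: "h1 = g_fun k psi1" using h1(1) by (auto simp: G_class_def)
  obtain h2 where h2: "h2 \<in> G_class k" "\<forall>x\<in>{x\<in>C. c x < 0}. h2 x = f0 x" "\<forall>x\<in>C - {x\<in>C. c x < 0}. h2 x = f1 x"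
    using sh2[rule_format, of "{x\<in>C. c x < 0}"] by blast
  obtain psi2 where psi2: "h2 = g_fun k psi2" using h2(1) by (auto simp: G_class_def)
  have T1: "0 \<le> c x * T psi1 x \<and> (c x > 0 \<longrightarrow> T psi1 x = 0 \<longrightarrow> p x < q x)" if x: "x \<in> C" for x
  proof (cases "c x > 0")
    case True
    then have "g_fun k psi1 x = basis_vec (p x)" using h1(2) psi1 p x by auto
    from realize[OF k0 this, of "q x"] q x pq
    have "0 \<le> T psi1 x" "T psi1 x = 0 \<longrightarrow> p x < q x" by (auto simp: T_def)
    then show ?thesis using True by simp
  next
    case False
    then have "g_fun k psi1 x = basis_vec (q x)" using h1(3) psi1 q x by auto
    from realize[OF k0 this, of "p x"] p x
    have "T psi1 x \<le> 0" by (auto simp: T_def)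
    then show ?thesis using False by (simp add: mult_nonpos_nonpos)
  qed
  have T2: "c x * T psi2 x \<le> 0 \<and> (c x > 0 \<longrightarrow> T psi2 x = 0 \<longrightarrow> q x < p x)" if x: "x \<in> C" for x
  proof (cases "c x < 0")
    case True
    then have "g_fun k psi2 x = basis_vec (p x)" using h2(2) psi2 p x by auto
    from realize[OF k0 this, of "q x"] q x
    have "0 \<le> T psi2 x" by (auto simp: T_def)
    then show ?thesis using True by (simp add: mult_nonpos_nonneg)
  next
    case False
    then have "g_fun k psi2 x = basis_vec (q x)" using h2(3) psi2 q x by auto
    from realize[OF k0 this, of "p x"] p x pq
    have "T psi2 x \<le> 0" "T psi2 x = 0 \<longrightarrow> q x < p x" by (auto simp: T_def)
    then show ?thesis using False by (simp add: mult_nonneg_nonpos)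
  qed
  have "0 \<le> (\<Sum>x\<in>C. c x * T psi1 x)" by (rule sum_nonneg) (use T1 in blast)
  then have "0 \<le> A" using Tsum[of psi1] by simp
  moreover have "(\<Sum>x\<in>C. c x * T psi2 x) \<le> 0" by (rule sum_nonpos) (use T2 in blast)
  then have "A \<le> 0" using Tsum[of psi2] by simp
  ultimately have A0: "A = 0" by simp
  have "c x0 * T psi1 x0 = 0"
    using sum_nonneg_eq_0_iff[OF fin, of "\<lambda>x. c x * T psi1 x"] T1 Tsum[of psi1] A0 x0(1) by auto
  then have "T psi1 x0 = 0" using cx0 by simp
  then have 1: "p x0 < q x0" using T1[OF x0(1)] cx0 by simp
  have "(\<Sum>x\<in>C. - (c x * T psi2 x)) = 0" using Tsum[of psi2] A0 by (simp add: sum_negf)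
  then have "- (c x0 * T psi2 x0) = 0"
    using sum_nonneg_eq_0_iff[OF fin, of "\<lambda>x. - (c x * T psi2 x)"] T2 x0(1) by auto
  then have "T psi2 x0 = 0" using cx0 by simp
  then have "q x0 < p x0" using T2[OF x0(1)] cx0 by simp
  with 1 show False by simp
qed

theorem theoremD6:
  fixes k :: nat
  assumes "k \<ge> 2"
  shows "natarajan_dim_eq (G_class k) (prob_simplex k) (labels k) (k - 1)"
  unfolding natarajan_dim_eq_def using lower[OF assms] upper[OF assms] by blast
end
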